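(* Let $n=p_1^{m_1}\cdots p_k^{m_k}$. The essential ideal graph $\mathcal E_{\mathbb Z_n}$ is Laplacian integral if and only if all eigenvalues of $\mathbf L(\mathscr G)$ are integers.
   Context: Primes $p_1<\dots<p_k$, positive integers $m_i$, $n$ not prime. Nonzero proper ideals of $\mathbb Z_n$ are uniquely $\langle p_1^{r_1}\cdots p_k^{r_k}\rangle$, $0\le r_i\le m_i$, $(r_i)\ne(0,\dots,0),(m_1,\dots,m_k)$; essential iff $r_j\ne m_j$ for all $j$. Essential ideal graph $\mathcal E_{\mathbb Z_n}$: vertices nonzero proper ideals, distinct $I,K$ adjacent iff $I+K$ essential. A graph is Laplacian integral if all eigenvalues of its Laplacian $D-A$ are integers. $\mathscr G$: vertex set the $2^k-2$ ideals $\langle\prod_{i\in S}p_i^{m_i}\rangle$, $S$ nonempty proper subset of $\{1,\dots,k\}$ (write $\Xi_I=S$), $I\sim J$ iff $\Xi_I\cap\Xi_J=\emptyset$. $n_I=\prod_{i\notin\Xi_I}m_i$, $N_I=\sum_{J\sim I}n_J$. $\mathbf L(\mathscr G)$: matrix indexed by $V(\mathscr G)$ with diagonal entries $N_I$, $(I,J)$-entry $-n_J$ if $I\ne J$, $I\sim J$, and $0$ otherwise. *)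

theory Defs
  imports "HOL-Number_Theory.Number_Theory" "HOL-Algebra.Algebra"
begin

abbreviation Zn :: "nat \<Rightarrow> int ring" where
  "Zn n \<equiv> residue_ring (int n)"

definition essential_ideal :: "('a, 'b) ring_scheme \<Rightarrow> 'a set \<Rightarrow> bool" where
  "essential_ideal R I \<longleftrightarrow> ideal I R \<and>
     (\<forall>J. ideal J R \<and> J \<noteq> {\<zero>\<^bsub>R\<^esub>} \<longrightarrow> I \<inter> J \<noteq> {\<zero>\<^bsub>R\<^esub>})"

definition EIG_vertices :: "('a, 'b) ring_scheme \<Rightarrow> 'a set set" where
  "EIG_vertices R = {I. ideal I R \<and> I \<noteq> {\<zero>\<^bsub>R\<^esub>} \<and> I \<noteq> carrier R}"

definition EIG_adj :: "('a, 'b) ring_scheme \<Rightarrow> 'a set \<Rightarrow> 'a set \<Rightarrow> bool" where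
  "EIG_adj R I K \<longleftrightarrow> I \<in> EIG_vertices R \<and> K \<in> EIG_vertices R \<and> I \<noteq> K
     \<and> essential_ideal R (I <+>\<^bsub>R\<^esub> K)"

definition laplacian :: "'v set \<Rightarrow> ('v \<Rightarrow> 'v \<Rightarrow> bool) \<Rightarrow> 'v \<Rightarrow> 'v \<Rightarrow> int" where
  "laplacian V E x y =
     (if x = y then int (card {z \<in> V. E x z}) else if E x y then -1 else 0)"

definition is_eigenvalue :: "'v set \<Rightarrow> ('v \<Rightarrow> 'v \<Rightarrow> complex) \<Rightarrow> complex \<Rightarrow> bool" where
  "is_eigenvalue V M c \<longleftrightarrow> (\<exists>u :: 'v \<Rightarrow> complex. (\<exists>x\<in>V. u x \<noteq> 0) \<and>
      (\<forall>x\<in>V. (\<Sum>y\<in>V. M x y * u y) = c * u x))"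

definition all_eigenvalues_integral :: "'v set \<Rightarrow> ('v \<Rightarrow> 'v \<Rightarrow> int) \<Rightarrow> bool" where
  "all_eigenvalues_integral V M \<longleftrightarrow>
     (\<forall>c. is_eigenvalue V (\<lambda>x y. of_int (M x y)) c \<longrightarrow> c \<in> \<int>)"

definition laplacian_integral :: "'v set \<Rightarrow> ('v \<Rightarrow> 'v \<Rightarrow> bool) \<Rightarrow> bool" where
  "laplacian_integral V E \<longleftrightarrow> all_eigenvalues_integral V (laplacian V E)"

text \<open>The graph G: vertices are indexed by Xi_I = S, a nonempty proper subset of the
  set of prime divisors of n (vertex = ideal generated by the product of p^{m_p}, p in S).\<close>
definition G_vertices :: "nat \<Rightarrow> nat set set" where
  "G_vertices n = {S. S \<subseteq> prime_factors n \<and> S \<noteq> {} \<and> S \<noteq> prime_factors n}"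

definition G_adj :: "nat \<Rightarrow> nat set \<Rightarrow> nat set \<Rightarrow> bool" where
  "G_adj n S T \<longleftrightarrow> S \<in> G_vertices n \<and> T \<in> G_vertices n \<and> S \<inter> T = {}"

definition n_weight :: "nat \<Rightarrow> nat set \<Rightarrow> nat" where
  "n_weight n S = (\<Prod>p \<in> prime_factors n - S. multiplicity p n)"

definition N_weight :: "nat \<Rightarrow> nat set \<Rightarrow> nat" where
  "N_weight n S = (\<Sum>T \<in> {T \<in> G_vertices n. G_adj n S T}. n_weight n T)"

definition LG :: "nat \<Rightarrow> nat set \<Rightarrow> nat set \<Rightarrow> int" where
  "LG n S T = (if S = T then int (N_weight n S)
               else if G_adj n S T then - int (n_weight n T) else 0)"

end

theory Submission
  imports Defs
begin


lemma lap_apply: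
  fixes u :: "'v \<Rightarrow> complex"
  assumes "finite V" "x \<in> V" "\<not> E x x"
  shows "(\<Sum>y\<in>V. of_int (laplacian V E x y) * u y)
     = of_nat (card {z\<in>V. E x z}) * u x - (\<Sum>y\<in>{z\<in>V. E x z}. u y)"
proof -
  have "(\<Sum>y\<in>V. of_int (laplacian V E x y) * u y)
      = (\<Sum>y\<in>V. (if y = x then of_nat (card {z\<in>V. E x z}) * u y else 0) - (if E x y then u y else 0))"
    by (rule sum.cong) (use assms in \<open>auto simp: laplacian_def\<close>)
  also have "\<dots> = of_nat (card {z\<in>V. E x z}) * u x - (\<Sum>y\<in>{z\<in>V. E x z}. u y)"
    using assms by (simp add: sum_subtractf sum.inter_filter)
  finally show ?thesis .
qed

lemma sum_group_cls:
  fixes f :: "'v \<Rightarrow> complex"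
  assumes "finite XX" "finite W" "\<And>x. x \<in> XX \<Longrightarrow> cls x \<in> W"
  shows "(\<Sum>z\<in>{z\<in>XX. P (cls z)}. f z) = (\<Sum>T\<in>{T\<in>W. P T}. \<Sum>z\<in>{z\<in>XX. cls z = T}. f z)"
proof -
  have "(\<Sum>z\<in>{z\<in>XX. P (cls z)}. f z) = (\<Sum>T\<in>W. \<Sum>z\<in>{z\<in>{z\<in>XX. P (cls z)}. cls z = T}. f z)"
    by (rule sum.group[symmetric]) (use assms in auto)
  also have "\<dots> = (\<Sum>T\<in>W. if P T then (\<Sum>z\<in>{z\<in>XX. cls z = T}. f z) else 0)"
  proof (rule sum.cong)
    fix T assume "T \<in> W"
    show "(\<Sum>z\<in>{z\<in>{z\<in>XX. P (cls z)}. cls z = T}. f z) = (if P T then (\<Sum>z\<in>{z\<in>XX. cls z = T}. f z) else 0)"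
    proof (cases "P T")
      case True then show ?thesis by (auto intro: sum.cong)
    next
      case False
      then have e: "{z\<in>{z\<in>XX. P (cls z)}. cls z = T} = {}" by auto
      show ?thesis by (simp only: e False if_False sum.empty)
    qed
  qed simp
  also have "\<dots> = (\<Sum>T\<in>{T\<in>W. P T}. \<Sum>z\<in>{z\<in>XX. cls z = T}. f z)"
    by (simp only: sum.inter_filter[OF assms(2)])
  finally show ?thesis .
qed

lemma abstract_main:
  fixes V :: "'v set" and E :: "'v \<Rightarrow> 'v \<Rightarrow> bool" and W :: "'w set"
    and A :: "'w \<Rightarrow> 'w \<Rightarrow> bool" and w :: "'w \<Rightarrow> nat" and cls :: "'v \<Rightarrow> 'w"
    and ess :: "'v set" and M :: "'w \<Rightarrow> 'w \<Rightarrow> int"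
  assumes fV: "finite V" and fW: "finite W" and essV: "ess \<subseteq> V"
    and clsW: "\<And>x. x \<in> V - ess \<Longrightarrow> cls x \<in> W"
    and fib: "\<And>S. S \<in> W \<Longrightarrow> card {x \<in> V - ess. cls x = S} = w S"
    and wpos: "\<And>S. S \<in> W \<Longrightarrow> w S > 0"
    and Eiff: "\<And>x y. x \<in> V \<Longrightarrow> y \<in> V \<Longrightarrow>
        E x y \<longleftrightarrow> x \<noteq> y \<and> (x \<in> ess \<or> y \<in> ess \<or> A (cls x) (cls y))"
    and Asym: "\<And>S T. A S T \<Longrightarrow> A T S"
    and Airr: "\<And>S. \<not> A S S"
    and AW: "\<And>S T. A S T \<Longrightarrow> S \<in> W \<and> T \<in> W"
    and Mdef: "\<And>S T. M S T = (if S = T then int (\<Sum>T\<in>{T\<in>W. A S T}. w T)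
                   else if A S T then - int (w T) else 0)"
  shows "laplacian_integral V E \<longleftrightarrow> all_eigenvalues_integral W M"
proof -
  define t where "t = card ess"
  define Nb where "Nb S = (\<Sum>T\<in>{T\<in>W. A S T}. w T)" for S
  define fibr where "fibr S = {x \<in> V - ess. cls x = S}" for S
  have fess: "finite ess" using fV essV finite_subset by blast
  have fVe: "finite (V - ess)" using fV by blast
  have Eirr: "\<And>x. x \<in> V \<Longrightarrow> \<not> E x x" using Eiff by blast
  have Esym: "\<And>x y. x \<in> V \<Longrightarrow> y \<in> V \<Longrightarrow> E x y \<longleftrightarrow> E y x"
    using Eiff Asym by blast
  have nbhd_ne: "{z\<in>V. E x z} = ess \<union> {z\<in>V - ess. A (cls x) (cls z)}" if "x \<in> V - ess" for x
    using that Eiff essV Airr by auto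
  have nbhd_e: "{z\<in>V. E x z} = V - {x}" if "x \<in> ess" for x
    using that Eiff essV by auto
  have sumA: "(\<Sum>z\<in>{z\<in>V - ess. A S (cls z)}. f z) = (\<Sum>T\<in>{T\<in>W. A S T}. \<Sum>z\<in>fibr T. f z)"
    for S and f :: "'v \<Rightarrow> complex"
    unfolding fibr_def by (rule sum_group_cls) (use fVe fW clsW in auto)
  have sum_nbhd_ne: "(\<Sum>z\<in>{z\<in>V. E x z}. f z) = (\<Sum>z\<in>ess. f z) + (\<Sum>T\<in>{T\<in>W. A (cls x) T}. \<Sum>z\<in>fibr T. f z)"
    if "x \<in> V - ess" for x and f :: "'v \<Rightarrow> complex"
  proof -
    have "(\<Sum>z\<in>{z\<in>V. E x z}. f z) = (\<Sum>z\<in>ess. f z) + (\<Sum>z\<in>{z\<in>V - ess. A (cls x) (cls z)}. f z)"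
      unfolding nbhd_ne[OF that] by (rule sum.union_disjoint) (use fess fVe in auto)
    then show ?thesis by (simp only: sumA)
  qed
  have fibcard: "(\<Sum>z\<in>fibr T. (1::complex)) = of_nat (w T)" if "T \<in> W" for T
    using fib[OF that] unfolding fibr_def by simp
  have deg_ne: "of_nat (card {z\<in>V. E x z}) = (of_nat t + of_nat (Nb (cls x)) :: complex)"
    if "x \<in> V - ess" for x
  proof -
    have "of_nat (card {z\<in>V. E x z}) = of_nat t + (\<Sum>T\<in>{T\<in>W. A (cls x) T}. of_nat (card (fibr T)) :: complex)"
      using sum_nbhd_ne[OF that, of "\<lambda>_. 1"] by (simp add: t_def)
    also have "\<dots> = of_nat t + (\<Sum>T\<in>{T\<in>W. A (cls x) T}. of_nat (w T))"
      by (rule arg_cong, rule sum.cong) (simp_all add: fib[folded fibr_def])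
    finally show ?thesis by (simp add: Nb_def)
  qed
  have Mapp: "(\<Sum>T\<in>W. of_int (M S T) * \<xi> T) = of_nat (Nb S) * \<xi> S - (\<Sum>T\<in>{T\<in>W. A S T}. of_nat (w T) * \<xi> T)"
    if "S \<in> W" for S and \<xi> :: "'w \<Rightarrow> complex"
  proof -
    have "(\<Sum>T\<in>W. of_int (M S T) * \<xi> T)
      = (\<Sum>T\<in>W. (if T = S then of_nat (Nb S) * \<xi> T else 0) - (if A S T then of_nat (w T) * \<xi> T else 0))"
      by (rule sum.cong) (use Airr in \<open>auto simp: Mdef Nb_def\<close>)
    also have "\<dots> = of_nat (Nb S) * \<xi> S - (\<Sum>T\<in>{T\<in>W. A S T}. of_nat (w T) * \<xi> T)"
      using that fW by (simp add: sum_subtractf sum.inter_filter)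
    finally show ?thesis .
  qed
  show ?thesis
  proof
    assume LI: "laplacian_integral V E"
    show "all_eigenvalues_integral W M"
      unfolding all_eigenvalues_integral_def
    proof (intro allI impI)
      fix lam assume "is_eigenvalue W (\<lambda>x y. of_int (M x y)) lam"
      then obtain \<xi> S0 where S0: "S0 \<in> W" "\<xi> S0 \<noteq> 0"
        and eq: "\<And>S. S \<in> W \<Longrightarrow> (\<Sum>T\<in>W. of_int (M S T) * \<xi> T) = lam * \<xi> S"
        unfolding is_eigenvalue_def by blast
      show "lam \<in> \<int>"
      proof (cases "lam = 0")
        case True then show ?thesis by simp
      next
        case False
        have "lam * (\<Sum>S\<in>W. of_nat (w S) * \<xi> S) = (\<Sum>S\<in>W. of_nat (w S) * (lam * \<xi> S))"
          by (simp add: sum_distrib_left algebra_simps)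
        also have "\<dots> = (\<Sum>S\<in>W. of_nat (w S) * (of_nat (Nb S) * \<xi> S - (\<Sum>T\<in>{T\<in>W. A S T}. of_nat (w T) * \<xi> T)))"
          by (rule sum.cong) (auto simp: eq[symmetric] Mapp)
        also have "\<dots> = (\<Sum>S\<in>W. of_nat (w S) * of_nat (Nb S) * \<xi> S) - (\<Sum>S\<in>W. \<Sum>T\<in>W. if A S T then of_nat (w S) * of_nat (w T) * \<xi> T else 0)"
          by (simp add: sum_subtractf right_diff_distrib sum_distrib_left sum.inter_filter[OF fW] if_distrib mult.assoc cong: if_cong)
        also have "(\<Sum>S\<in>W. \<Sum>T\<in>W. if A S T then of_nat (w S) * of_nat (w T) * \<xi> T else 0)
             = (\<Sum>T\<in>W. \<Sum>S\<in>W. if A T S then of_nat (w S) * of_nat (w T) * \<xi> T else (0::complex))"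
          by (subst sum.swap) (rule sum.cong[OF refl], rule sum.cong[OF refl], use Asym in \<open>auto\<close>)
        also have "\<dots> = (\<Sum>T\<in>W. of_nat (w T) * of_nat (Nb T) * \<xi> T)"
          by (rule sum.cong) (auto simp: Nb_def sum.inter_filter[OF fW, symmetric] sum_distrib_right[symmetric] sum_distrib_left mult_ac)
        finally have "lam * (\<Sum>S\<in>W. of_nat (w S) * \<xi> S) = 0"
          by (simp add: mult_ac)
        with False have wsum: "(\<Sum>S\<in>W. of_nat (w S) * \<xi> S) = 0" by simp
        define u where "u z = (if z \<in> ess then 0 else \<xi> (cls z))" for z
        have sumfib: "(\<Sum>z\<in>fibr T. u z) = of_nat (w T) * \<xi> T" if "T \<in> W" for T
        proof -
          have "(\<Sum>z\<in>fibr T. u z) = (\<Sum>z\<in>fibr T. \<xi> T)"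
            by (rule sum.cong) (auto simp: fibr_def u_def)
          then show ?thesis using fib[OF that] by (simp add: fibr_def)
        qed
        have "is_eigenvalue V (\<lambda>x y. of_int (laplacian V E x y)) (of_nat t + lam)"
          unfolding is_eigenvalue_def
        proof (intro exI[of _ u] conjI)
          have "card (fibr S0) > 0" using fib[OF S0(1)] wpos[OF S0(1)] by (simp add: fibr_def)
          then obtain x where x: "x \<in> fibr S0" by (metis card_gt_0_iff ex_in_conv)
          then show "\<exists>x\<in>V. u x \<noteq> 0" using S0 by (auto simp: fibr_def u_def)
          show "\<forall>x\<in>V. (\<Sum>y\<in>V. of_int (laplacian V E x y) * u y) = (of_nat t + lam) * u x"
          proof
            fix x assume xV: "x \<in> V"
            show "(\<Sum>y\<in>V. of_int (laplacian V E x y) * u y) = (of_nat t + lam) * u x"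
            proof (cases "x \<in> ess")
              case True
              have "(\<Sum>y\<in>V. u y) = (\<Sum>y\<in>ess. u y) + (\<Sum>y\<in>V - ess. u y)"
                using fV essV by (metis sum.subset_diff add.commute)
              also have "(\<Sum>y\<in>ess. u y) = 0" by (simp add: u_def)
              also have "(\<Sum>y\<in>V - ess. u y) = (\<Sum>y\<in>{y\<in>V - ess. True}. u y)" by (rule sum.cong) auto
              also have "\<dots> = (\<Sum>T\<in>W. \<Sum>z\<in>fibr T. u z)"
                unfolding fibr_def by (subst sum_group_cls[where W=W and cls=cls]) (use fVe fW clsW in auto)
              also have "\<dots> = 0" using wsum by (simp add: sumfib)
              finally have s0: "(\<Sum>y\<in>V. u y) = 0" by simp
              have "(\<Sum>y\<in>V - {x}. u y) = (\<Sum>y\<in>V. u y) - u x"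
                using fV xV by (simp add: sum_diff1)
              then show ?thesis
                using lap_apply[where V=V and x=x and E=E and u=u, OF fV xV Eirr[OF xV]] nbhd_e[OF True] s0 True
                by (simp add: u_def)
            next
              case False
              then have xe: "x \<in> V - ess" using xV by blast
              have "(\<Sum>y\<in>V. of_int (laplacian V E x y) * u y)
                  = (of_nat t + of_nat (Nb (cls x))) * \<xi> (cls x) - (\<Sum>T\<in>{T\<in>W. A (cls x) T}. of_nat (w T) * \<xi> T)"
              proof -
                have ux: "u x = \<xi> (cls x)" using False by (simp add: u_def)
                have ue0: "(\<Sum>z\<in>ess. u z) = 0" by (simp add: u_def)
                have "(\<Sum>T\<in>{T\<in>W. A (cls x) T}. \<Sum>z\<in>fibr T. u z) = (\<Sum>T\<in>{T\<in>W. A (cls x) T}. of_nat (w T) * \<xi> T)"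
                  by (rule sum.cong) (simp_all add: sumfib)
                then show ?thesis
                  using lap_apply[where V=V and x=x and E=E and u=u, OF fV xV Eirr[OF xV]] deg_ne[OF xe] sum_nbhd_ne[OF xe, of u] ux ue0
                  by simp
              qed
              also have "\<dots> = of_nat t * \<xi> (cls x) + lam * \<xi> (cls x)"
                using eq[OF clsW[OF xe]] Mapp[OF clsW[OF xe], of \<xi>] by (simp add: algebra_simps)
              finally show ?thesis using False by (simp add: u_def algebra_simps)
            qed
          qed
        qed
        then have "of_nat t + lam \<in> \<int>" using LI
          unfolding laplacian_integral_def all_eigenvalues_integral_def by simp
        then have "of_nat t + lam - of_nat t \<in> \<int>" by (intro Ints_diff) auto
        then show ?thesis by simp
      qed
    qed
  next
    assume MI: "all_eigenvalues_integral W M"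
    show "laplacian_integral V E"
      unfolding laplacian_integral_def all_eigenvalues_integral_def
    proof (intro allI impI)
      fix c assume "is_eigenvalue V (\<lambda>x y. of_int (laplacian V E x y)) c"
      then obtain u x0 where x0: "x0 \<in> V" "u x0 \<noteq> 0"
        and eq: "\<And>x. x \<in> V \<Longrightarrow> (\<Sum>y\<in>V. of_int (laplacian V E x y) * u y) = c * u x"
        unfolding is_eigenvalue_def by blast
      have colsum: "(\<Sum>x\<in>V. of_int (laplacian V E x y)) = (0::complex)" if yV: "y \<in> V" for y
      proof -
        have "(\<Sum>x\<in>V. of_int (laplacian V E x y)) = (\<Sum>x\<in>V. of_int (laplacian V E y x) * (1::complex))"
          by (rule sum.cong) (use yV Esym in \<open>auto simp: laplacian_def\<close>)
        also have "\<dots> = 0" using lap_apply[where V=V and x=y and E=E and u="\<lambda>_. 1", OF fV yV Eirr[OF yV]] by simp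
        finally show ?thesis .
      qed
      have "c * (\<Sum>x\<in>V. u x) = (\<Sum>x\<in>V. \<Sum>y\<in>V. of_int (laplacian V E x y) * u y)"
        by (simp add: sum_distrib_left eq)
      also have "\<dots> = (\<Sum>y\<in>V. (\<Sum>x\<in>V. of_int (laplacian V E x y)) * u y)"
        by (subst sum.swap) (simp add: sum_distrib_right)
      also have "\<dots> = 0" by (simp add: colsum)
      finally have tot: "c * (\<Sum>x\<in>V. u x) = 0" .
      show "c \<in> \<int>"
      proof (cases "c = 0")
        case True then show ?thesis by simp
      next
        case False
        with tot have s0: "(\<Sum>x\<in>V. u x) = 0" by simp
        show ?thesis
        proof (cases "\<exists>x\<in>ess. u x \<noteq> 0")
          case True
          then obtain x where x: "x \<in> ess" "u x \<noteq> 0" by blast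
          have xV: "x \<in> V" using x essV by blast
          have cV0: "0 < card V" using fV xV card_gt_0_iff by blast
          have cV: "of_nat (card V - 1) = (of_nat (card V) - 1 :: complex)"
            using cV0 by (simp add: of_nat_diff Suc_leI)
          have cd: "card (V - {x}) = card V - 1" using fV xV by (simp add: card_Diff_singleton)
          have s1: "(\<Sum>y\<in>V - {x}. u y) = (\<Sum>y\<in>V. u y) - u x"
            using fV xV by (simp add: sum_diff1)
          have "c * u x = of_nat (card (V - {x})) * u x - (\<Sum>y\<in>V - {x}. u y)"
            using eq[OF xV] lap_apply[where V=V and x=x and E=E and u=u, OF fV xV Eirr[OF xV]] nbhd_e[OF x(1)]
            by simp
          also have "\<dots> = (of_nat (card V) - 1) * u x + u x" unfolding cd cV s1 s0 by simp
          finally have "c * u x = of_nat (card V) * u x" by (simp add: algebra_simps)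
          then have "c = of_nat (card V)" using x(2) by simp
          then show ?thesis by simp
        next
          case False
          then have ue: "\<And>x. x \<in> ess \<Longrightarrow> u x = 0" by blast
          define Y where "Y T = (\<Sum>z\<in>fibr T. u z)" for T
          have eqne: "(of_nat t + of_nat (Nb (cls x)) - c) * u x = (\<Sum>T\<in>{T\<in>W. A (cls x) T}. Y T)"
            if "x \<in> V - ess" for x
          proof -
            have xV: "x \<in> V" using that by blast
            have "c * u x = (of_nat t + of_nat (Nb (cls x))) * u x - (\<Sum>T\<in>{T\<in>W. A (cls x) T}. Y T)"
              using eq[OF xV] lap_apply[where V=V and x=x and E=E and u=u, OF fV xV Eirr[OF xV]] deg_ne[OF that] sum_nbhd_ne[OF that, of u] ue
              by (simp add: Y_def)
            then show ?thesis by (simp add: algebra_simps)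
          qed
          show ?thesis
          proof (cases "\<exists>S\<in>W. c = of_nat t + of_nat (Nb S)")
            case True
            then obtain S where "c = of_nat t + of_nat (Nb S)" by blast
            then show ?thesis by simp
          next
            case False
            define z where "z S = (\<Sum>T\<in>{T\<in>W. A S T}. Y T) / (of_nat t + of_nat (Nb S) - c)" for S
            have uz: "u x = z (cls x)" if "x \<in> V - ess" for x
            proof -
              have "of_nat t + of_nat (Nb (cls x)) - c \<noteq> 0" using False clsW[OF that] by auto
              then show ?thesis using eqne[OF that] by (simp add: z_def field_simps)
            qed
            have Yz: "Y T = of_nat (w T) * z T" if "T \<in> W" for T
            proof -
              have "Y T = (\<Sum>x\<in>fibr T. z T)" unfolding Y_def
                by (rule sum.cong) (auto simp: fibr_def uz)
              then show ?thesis using fib[OF that] by (simp add: fibr_def)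
            qed
            show ?thesis
            proof (cases "\<exists>S\<in>W. z S \<noteq> 0")
              case True
              then obtain S1 where S1: "S1 \<in> W" "z S1 \<noteq> 0" by blast
              have "is_eigenvalue W (\<lambda>x y. of_int (M x y)) (c - of_nat t)"
                unfolding is_eigenvalue_def
              proof (intro exI[of _ z] conjI ballI)
                show "\<exists>x\<in>W. z x \<noteq> 0" using S1 by blast
                fix S assume SW: "S \<in> W"
                have ne: "of_nat t + of_nat (Nb S) - c \<noteq> 0" using False SW by auto
                have h1: "(of_nat t + of_nat (Nb S) - c) * z S = (\<Sum>T\<in>{T\<in>W. A S T}. of_nat (w T) * z T)"
                  using ne by (simp add: z_def Yz)
                show "(\<Sum>T\<in>W. of_int (M S T) * z T) = (c - of_nat t) * z S"
                  unfolding Mapp[OF SW, of z] h1[symmetric] by (simp add: algebra_simps)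
              qed
              then have "c - of_nat t \<in> \<int>" using MI unfolding all_eigenvalues_integral_def by blast
              then have "c - of_nat t + of_nat t \<in> \<int>" by (intro Ints_add) auto
              then show ?thesis by simp
            next
              case False
              then have "u x0 = 0" using x0 ue uz clsW by (cases "x0 \<in> ess") auto
              with x0 show ?thesis by simp
            qed
          qed
        qed
      qed
    qed
  qed
qed



lemma small_dvd: "0 \<le> x \<Longrightarrow> x < m \<Longrightarrow> m dvd x \<Longrightarrow> x = (0::int)"
  by (metis dvd_eq_mod_eq_0 mod_pos_pos_trivial)

definition dI :: "nat \<Rightarrow> nat \<Rightarrow> int set" where
  "dI n d = {x. 0 \<le> x \<and> x < int n \<and> int d dvd x}"

lemma Zn_simps:
  "carrier (Zn n) = {0..int n - 1}" "\<zero>\<^bsub>Zn n\<^esub> = 0"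
  "x \<oplus>\<^bsub>Zn n\<^esub> y = (x + y) mod int n" "x \<otimes>\<^bsub>Zn n\<^esub> y = (x * y) mod int n"
  by (simp_all add: residue_ring_def)

lemma Zn_cring: "n > 1 \<Longrightarrow> cring (Zn n)"
  by (rule residues.cring) (simp add: residues_def)

lemma dI_ideal:
  assumes n1: "n > 1" and d: "d dvd n"
  shows "ideal (dI n d) (Zn n)"
proof (cases "d = n")
  case True
  have "dI n d = {\<zero>\<^bsub>Zn n\<^esub>}"
    using True n1 small_dvd[of _ "int n"] by (auto simp: dI_def Zn_simps)
  then show ?thesis using Zn_cring[OF n1] by (simp add: cring.axioms(1) ring.zeroideal)
next
  case False
  have dpos: "d > 0" by (rule dvd_pos_nat[OF _ d]) (use n1 in linarith)
  have "d \<le> n" by (rule dvd_imp_le[OF d]) (use n1 in linarith)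
  then have dlt: "d < n" using False by linarith
  have car: "int d \<in> carrier (Zn n)" using dlt by (simp add: Zn_simps)
  have "PIdl\<^bsub>Zn n\<^esub> (int d) = dI n d"
  proof
    show "PIdl\<^bsub>Zn n\<^esub> (int d) \<subseteq> dI n d"
    proof
      fix y assume "y \<in> PIdl\<^bsub>Zn n\<^esub> (int d)"
      then obtain x where y: "y = (x * int d) mod int n" unfolding cgenideal_def by (auto simp: Zn_simps)
      have "int d dvd (x * int d) mod int n"
        using d by (intro dvd_mod) auto
      then show "y \<in> dI n d" using y n1 by (simp add: dI_def)
    qed
    show "dI n d \<subseteq> PIdl\<^bsub>Zn n\<^esub> (int d)"
    proof
      fix y assume "y \<in> dI n d"
      then have y: "0 \<le> y" "y < int n" "int d dvd y" by (auto simp: dI_def)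
      then obtain k where k: "y = int d * k" by blast
      have k0: "0 \<le> k" using y(1) k dpos by (simp add: zero_le_mult_iff)
      have "k \<le> y" using k k0 dpos mult_left_mono[of 1 "int d" k] by (simp add: mult.commute)
      then have kc: "k \<in> carrier (Zn n)" using k0 y by (simp add: Zn_simps)
      have "k \<otimes>\<^bsub>Zn n\<^esub> int d = y" using y k by (simp add: Zn_simps mult.commute)
      then show "y \<in> PIdl\<^bsub>Zn n\<^esub> (int d)" using kc unfolding cgenideal_def by blast
    qed
  qed
  then show ?thesis using cring.cgenideal_ideal[OF Zn_cring[OF n1] car] by simp
qed

lemma ideal_is_dI:
  assumes n1: "n > 1" and I: "ideal I (Zn n)"
  shows "\<exists>d. d dvd n \<and> I = dI n d"
proof -
  have asg: "additive_subgroup I (Zn n)" using I by (simp add: ideal_def)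
  have sub: "I \<subseteq> {0..int n - 1}" using additive_subgroup.a_subset[OF asg] by (simp add: Zn_simps)
  have z: "0 \<in> I" using additive_subgroup.zero_closed[OF asg] by (simp add: Zn_simps)
  have lmul: "(x * a) mod int n \<in> I" if "a \<in> I" "0 \<le> x" "x < int n" for a x
    using ideal.I_l_closed[OF I that(1), of x] that by (simp add: Zn_simps)
  have add: "(a + b) mod int n \<in> I" if "a \<in> I" "b \<in> I" for a b
    using additive_subgroup.a_closed[OF asg that] by (simp add: Zn_simps)
  define P where "P k \<longleftrightarrow> 0 < k \<and> (int k \<in> I \<or> k = n)" for k :: nat
  have Pn: "P n" using n1 by (simp add: P_def)
  define d where "d = (LEAST k. P k)"
  have Pd: "P d" unfolding d_def by (rule LeastI[of P n, OF Pn])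
  have dmin: "\<And>k. P k \<Longrightarrow> d \<le> k" unfolding d_def by (rule Least_le)
  have dn: "d \<le> n" using dmin[OF Pn] .
  have dpos: "d > 0" using Pd by (simp add: P_def)
  have key: "int d dvd a" if a: "a \<in> I \<or> a = int n" for a
  proof (cases "d = n")
    case True
    show ?thesis
    proof (cases "a = int n")
      case True then show ?thesis using \<open>d = n\<close> by simp
    next
      case False
      then have aI: "a \<in> I" using a by blast
      then have a0: "0 \<le> a" "a < int n" using sub by auto
      have "a = 0"
      proof (rule ccontr)
        assume "a \<noteq> 0"
        then have "P (nat a)" using a0 aI by (simp add: P_def)
        then have "d \<le> nat a" by (rule dmin)
        then show False using a0 True by linarith
      qed
      then show ?thesis by simp
    qed
  next
    case False
    then have dlt: "d < n" using dn by simp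
    have dI': "int d \<in> I" using Pd False by (simp add: P_def)
    define q where "q = a div int d"
    define r where "r = a mod int d"
    have aqr: "a = int d * q + r" unfolding q_def r_def by simp
    have r0: "0 \<le> r" "r < int d" unfolding r_def using dpos by auto
    have rn: "r < int n" using r0 dlt by linarith
    have negq: "0 \<le> (- q) mod int n" "(- q) mod int n < int n" using n1 by auto
    have b: "((- q) mod int n * int d) mod int n \<in> I" by (rule lmul[OF dI' negq])
    have beq: "((- q) mod int n * int d) mod int n = (- q * int d) mod int n"
      by (simp add: mod_mult_left_eq)
    have rI: "r \<in> I"
    proof (cases "a = int n")
      case True
      have "(- q * int d) mod int n = (r - int n) mod int n" using aqr True by (simp add: algebra_simps)
      also have "\<dots> = r mod int n" by (rule minus_mod_self2)
      also have "\<dots> = r" using r0 rn by simp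
      finally show ?thesis using b beq by simp
    next
      case False
      then have aI: "a \<in> I" using a by blast
      have "(a + ((- q) mod int n * int d) mod int n) mod int n = (a + - q * int d) mod int n"
        by (simp add: beq mod_add_right_eq)
      also have "\<dots> = r mod int n" using aqr by (simp add: algebra_simps)
      also have "\<dots> = r" using r0 rn by simp
      finally show ?thesis using add[OF aI b] by simp
    qed
    have "r = 0"
    proof (rule ccontr)
      assume "r \<noteq> 0"
      then have "P (nat r)" using r0 rI by (simp add: P_def)
      then have "d \<le> nat r" by (rule dmin)
      then show False using r0 by linarith
    qed
    then show ?thesis using aqr by simp
  qed
  have ddvd: "d dvd n" using key[of "int n"] by simp
  have "I = dI n d"
  proof
    show "I \<subseteq> dI n d" using sub key by (auto simp: dI_def)
    show "dI n d \<subseteq> I"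
    proof
      fix y assume "y \<in> dI n d"
      then have y: "0 \<le> y" "y < int n" "int d dvd y" by (auto simp: dI_def)
      show "y \<in> I"
      proof (cases "d = n")
        case True
        then have "y = 0" using y small_dvd[of y "int n"] by simp
        then show ?thesis using z by simp
      next
        case False
        then have dI': "int d \<in> I" using Pd by (simp add: P_def)
        obtain k where k: "y = int d * k" using y by blast
        have k0: "0 \<le> k" using y(1) k dpos by (simp add: zero_le_mult_iff)
        have "k \<le> y" using k k0 dpos mult_left_mono[of 1 "int d" k] by (simp add: mult.commute)
        then have "(k * int d) mod int n \<in> I" using lmul[OF dI' k0] y by simp
        then show ?thesis using y k by (simp add: mult.commute)
      qed
    qed
  qed
  then show ?thesis using ddvd by blast
qed

lemma dI_n: "n > 0 \<Longrightarrow> dI n n = {0}"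
  using small_dvd[of _ "int n"] by (auto simp: dI_def)

lemma dI_mem: "d dvd n \<Longrightarrow> d < n \<Longrightarrow> int d \<in> dI n d"
  by (simp add: dI_def)

lemma dI_inj:
  assumes n1: "n > 1" and d: "d dvd n" and e: "e dvd n" and eq: "dI n d = dI n e"
  shows "d = e"
proof -
  have a: "e dvd d" if "d dvd n" "e dvd n" "dI n d = dI n e" "d < n" for d e
  proof -
    have "int d \<in> dI n e" using dI_mem[OF that(1,4)] that(3) by simp
    then show ?thesis by (simp add: dI_def)
  qed
  have dpos: "0 < d" by (rule dvd_pos_nat[OF _ d]) (use n1 in linarith)
  have epos: "0 < e" by (rule dvd_pos_nat[OF _ e]) (use n1 in linarith)
  have dle: "d \<le> n" "e \<le> n" by (rule dvd_imp_le[OF d], use n1 in linarith, rule dvd_imp_le[OF e], use n1 in linarith)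
  show ?thesis
  proof (cases "d < n")
    case True
    have ed: "e dvd d" using a[OF d e eq True] .
    have "e \<le> d" using dvd_imp_le[OF ed dpos] .
    then have "e < n" using True by simp
    then have "d dvd e" using a[OF e d eq[symmetric]] by blast
    then show ?thesis using ed by (simp add: dvd_antisym)
  next
    case False
    then have dn: "d = n" using dle by simp
    show ?thesis
    proof (rule ccontr)
      assume "d \<noteq> e"
      then have en: "e < n" using dle dn by simp
      have "d dvd e" using a[OF e d eq[symmetric] en] .
      then have "d \<le> e" using dvd_imp_le[OF _ epos] by blast
      then show False using en dn by simp
    qed
  qed
qed

lemma dI_zero_iff:
  assumes n1: "n > 1" and d: "d dvd n"
  shows "dI n d = {0} \<longleftrightarrow> d = n"
proof
  assume h: "dI n d = {0}"
  show "d = n"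
  proof (rule ccontr)
    assume "d \<noteq> n"
    moreover have "d \<le> n" by (rule dvd_imp_le[OF d]) (use n1 in linarith)
    ultimately have "d < n" by linarith
    moreover have "d > 0" by (rule dvd_pos_nat[OF _ d]) (use n1 in linarith)
    ultimately show False using dI_mem[OF d] h by auto
  qed
qed (use n1 dI_n in auto)

lemma dI_carrier_iff:
  assumes n1: "n > 1" and d: "d dvd n"
  shows "dI n d = carrier (Zn n) \<longleftrightarrow> d = 1"
proof
  assume h: "dI n d = carrier (Zn n)"
  have "(1::int) \<in> carrier (Zn n)" using n1 by (simp add: Zn_simps)
  then have "(1::int) \<in> dI n d" using h by simp
  then have "int d dvd 1" by (simp add: dI_def)
  then show "d = 1" by simp
qed (auto simp: dI_def Zn_simps)

lemma int_lcm_dvd: "int (lcm d e) dvd x \<longleftrightarrow> int d dvd x \<and> int e dvd x"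
  by (simp only: lcm_int_int_eq[symmetric] lcm_least_iff)

lemma dI_inter: "dI n d \<inter> dI n e = dI n (lcm d e)"
  unfolding dI_def int_lcm_dvd by blast

lemma dI_add: 
  assumes n1: "n > 1" and d: "d dvd n" and e: "e dvd n"
  shows "dI n d <+>\<^bsub>Zn n\<^esub> dI n e = dI n (gcd d e)"
proof
  show "dI n d <+>\<^bsub>Zn n\<^esub> dI n e \<subseteq> dI n (gcd d e)"
  proof
    fix y assume "y \<in> dI n d <+>\<^bsub>Zn n\<^esub> dI n e"
    then obtain a b where ab: "a \<in> dI n d" "b \<in> dI n e" "y = (a + b) mod int n"
      unfolding set_add_def' by (auto simp: Zn_simps)
    have ad: "int d dvd a" using ab(1) by (simp add: dI_def)
    have be: "int e dvd b" using ab(2) by (simp add: dI_def)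
    have gd: "int (gcd d e) dvd int d" by (simp only: of_nat_dvd_iff gcd_dvd1)
    have ge: "int (gcd d e) dvd int e" by (simp only: of_nat_dvd_iff gcd_dvd2)
    have g1: "int (gcd d e) dvd a" using dvd_trans[OF gd ad] .
    have g2: "int (gcd d e) dvd b" using dvd_trans[OF ge be] .
    have dn: "int d dvd int n" using d by (simp only: of_nat_dvd_iff)
    have g3: "int (gcd d e) dvd int n" using dvd_trans[OF gd dn] .
    have "int (gcd d e) dvd y" unfolding ab(3) by (rule dvd_mod[OF dvd_add[OF g1 g2] g3])
    then show "y \<in> dI n (gcd d e)" using ab(3) n1 by (simp add: dI_def)
  qed
  show "dI n (gcd d e) \<subseteq> dI n d <+>\<^bsub>Zn n\<^esub> dI n e"
  proof
    fix y assume "y \<in> dI n (gcd d e)"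
    then have y: "0 \<le> y" "y < int n" "int (gcd d e) dvd y" by (auto simp: dI_def)
    obtain k where k: "y = int (gcd d e) * k" using y by blast
    obtain u v where uv: "u * int d + v * int e = int (gcd d e)"
      using bezout_int[of "int d" "int e"] by (auto simp: gcd_int_int_eq)
    define a where "a = (int d * (u * k)) mod int n"
    define b where "b = (int e * (v * k)) mod int n"
    have dn'1: "int d dvd int n" using d by (simp only: of_nat_dvd_iff)
    have dn'2: "int e dvd int n" using e by (simp only: of_nat_dvd_iff)
    note dn' = dn'1 dn'2
    have "int d dvd a" unfolding a_def by (rule dvd_mod[OF _ dn'1]) simp
    then have a: "a \<in> dI n d" unfolding dI_def using n1 by (simp add: a_def)
    have "int e dvd b" unfolding b_def by (rule dvd_mod[OF _ dn'2]) simp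
    then have b: "b \<in> dI n e" unfolding dI_def using n1 by (simp add: b_def)
    have yy: "int d * (u * k) + int e * (v * k) = y" unfolding k uv[symmetric] by (simp add: algebra_simps)
    have "(a + b) mod int n = (int d * (u * k) + int e * (v * k)) mod int n"
      unfolding a_def b_def by (simp add: mod_add_eq)
    also have "\<dots> = y" unfolding yy using y by simp
    finally have eqab: "a \<oplus>\<^bsub>Zn n\<^esub> b = y" by (simp add: Zn_simps)
    show "y \<in> dI n d <+>\<^bsub>Zn n\<^esub> dI n e" unfolding set_add_def'
      by (rule UN_I[OF a], rule UN_I[OF b]) (simp add: eqab)
  qed
qed



definition cls :: "nat \<Rightarrow> nat \<Rightarrow> nat set" where
  "cls n d = {p \<in> prime_factors n. \<not> p * d dvd n}"

lemma pd_dvd_iff: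
  fixes n d p :: nat
  assumes n0: "n > 0" and d: "d dvd n" and p: "Factorial_Ring.prime p"
  shows "p * d dvd n \<longleftrightarrow> multiplicity p d < multiplicity p n"
proof -
  have d0: "d \<noteq> 0" using d n0 by auto
  have p0: "p \<noteq> 0" using p by auto
  have mpd: "multiplicity p (p * d) = Suc (multiplicity p d)"
    using p d0 p0 by (simp add: prime_elem_multiplicity_mult_distrib multiplicity_self)
  show ?thesis
  proof
    assume "p * d dvd n"
    then have "multiplicity p (p * d) \<le> multiplicity p n" using n0 by (intro dvd_imp_multiplicity_le) auto
    then show "multiplicity p d < multiplicity p n" using mpd by simp
  next
    assume lt: "multiplicity p d < multiplicity p n"
    show "p * d dvd n"
    proof (rule multiplicity_le_imp_dvd)
      show "p * d \<noteq> 0" using p0 d0 by simp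
      fix q :: nat assume q: "Factorial_Ring.prime q"
      show "multiplicity q (p * d) \<le> multiplicity q n"
      proof (cases "q = p")
        case True then show ?thesis using mpd lt by simp
      next
        case False
        have "multiplicity q (p * d) = multiplicity q p + multiplicity q d"
          using q p0 d0 by (simp add: prime_elem_multiplicity_mult_distrib)
        moreover have "multiplicity q p = 0"
        proof -
          have "\<not> q dvd p" using False q p primes_dvd_imp_eq by blast
          then show ?thesis by (rule not_dvd_imp_multiplicity_0)
        qed
        moreover have "multiplicity q d \<le> multiplicity q n"
          using d n0 by (intro dvd_imp_multiplicity_le) auto
        ultimately show ?thesis by simp
      qed
    qed
  qed
qed

lemma cls_alt:
  assumes n0: "n > 0" and d: "d dvd n"
  shows "cls n d = {p \<in> prime_factors n. multiplicity p n \<le> multiplicity p d}"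
proof -
  have "p * d dvd n \<longleftrightarrow> multiplicity p d < multiplicity p n" if "p \<in> prime_factors n" for p
    using pd_dvd_iff[OF n0 d] in_prime_factors_imp_prime[OF that] by blast
  then show ?thesis unfolding cls_def by (auto simp: not_less)
qed

lemma cls_sub: "cls n d \<subseteq> prime_factors n" by (auto simp: cls_def)

lemma cls_one: "cls n 1 = {}" by (auto simp: cls_def)

lemma cls_full:
  assumes n0: "n > 0" and d: "d dvd n" and full: "cls n d = prime_factors n"
  shows "d = n"
proof -
  have d0: "d \<noteq> 0" using d n0 by auto
  have "n dvd d"
  proof (rule multiplicity_le_imp_dvd)
    show "n \<noteq> 0" using n0 by simp
    fix q :: nat assume q: "Factorial_Ring.prime q"
    show "multiplicity q n \<le> multiplicity q d"
    proof (cases "q \<in> prime_factors n")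
      case True
      then show ?thesis using full cls_alt[OF n0 d] by auto
    next
      case False
      then have "\<not> q dvd n" using q n0 by (auto simp: in_prime_factors_iff)
      then show ?thesis by (simp add: not_dvd_imp_multiplicity_0)
    qed
  qed
  then show ?thesis using d by (simp add: dvd_antisym)
qed

lemma cls_gcd:
  assumes n0: "n > 0" and d: "d dvd n" and e: "e dvd n"
  shows "cls n (gcd d e) = cls n d \<inter> cls n e"
proof -
  have "\<not> p * gcd d e dvd n \<longleftrightarrow> \<not> p * d dvd n \<and> \<not> p * e dvd n" if p: "p \<in> prime_factors n" for p
  proof
    assume "\<not> p * gcd d e dvd n"
    then show "\<not> p * d dvd n \<and> \<not> p * e dvd n"
      by (meson dvd_trans gcd_dvd1 gcd_dvd2 mult_dvd_mono dvd_refl)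
  next
    assume h: "\<not> p * d dvd n \<and> \<not> p * e dvd n"
    have pp: "Factorial_Ring.prime p" using p by auto
    have g: "gcd d e dvd n" using d by (meson dvd_trans gcd_dvd1)
    have d0: "d \<noteq> 0" "e \<noteq> 0" using d e n0 by auto
    have nu: "\<not> is_unit p" using pp by auto
    define a where "a = multiplicity p n"
    have "a \<le> multiplicity p d" "a \<le> multiplicity p e"
      using h pd_dvd_iff[OF n0 d pp] pd_dvd_iff[OF n0 e pp] by (auto simp: a_def)
    then have "p ^ a dvd d" "p ^ a dvd e"
      using power_dvd_iff_le_multiplicity[OF d0(1) nu] power_dvd_iff_le_multiplicity[OF d0(2) nu] by auto
    then have "p ^ a dvd gcd d e" by simp
    then have "a \<le> multiplicity p (gcd d e)"
      using power_dvd_iff_le_multiplicity[of "gcd d e" p a] nu d0 by simp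
    then show "\<not> p * gcd d e dvd n" using pd_dvd_iff[OF n0 g pp] by (simp add: a_def)
  qed
  then show ?thesis unfolding cls_def by blast
qed

lemma ess_iff_cls:
  assumes n1: "n > 1" and g: "g dvd n"
  shows "(\<forall>e. e dvd n \<and> e \<noteq> n \<longrightarrow> lcm g e \<noteq> n) \<longleftrightarrow> cls n g = {}"
proof
  assume H: "\<forall>e. e dvd n \<and> e \<noteq> n \<longrightarrow> lcm g e \<noteq> n"
  show "cls n g = {}"
  proof (rule ccontr)
    assume "cls n g \<noteq> {}"
    then obtain p where p: "p \<in> prime_factors n" "\<not> p * g dvd n" unfolding cls_def by blast
    have pp: "Factorial_Ring.prime p" and pn: "p dvd n" using p n1 by (auto simp: in_prime_factors_iff)
    have n0: "n > 0" using n1 by simp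
    have nu: "\<not> is_unit p" using pp by auto
    define a where "a = multiplicity p n"
    have "a \<le> multiplicity p g" using p(2) pd_dvd_iff[OF n0 g pp] by (simp add: a_def)
    moreover have g0: "g \<noteq> 0" using g n0 by auto
    ultimately have pag: "p ^ a dvd g" using power_dvd_iff_le_multiplicity[OF g0 nu] by simp
    have pan: "p ^ a dvd n" unfolding a_def by (rule multiplicity_dvd)
    have a1: "a \<ge> 1" using pn n0 nu by (simp add: a_def power_dvd_iff_le_multiplicity[symmetric])
    define e where "e = n div p ^ a"
    have ne: "n = p ^ a * e" using pan unfolding e_def by simp
    have ed: "e dvd n" using ne by simp
    have pgt: "p ^ a > 1" using one_less_power[of p a] prime_gt_1_nat[OF pp] a1 by simp
    have en: "e \<noteq> n"
    proof
      assume "e = n"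
      then have "n * 1 = n * p ^ a" using ne by (metis mult.commute mult_1_right)
      moreover have "n * 1 < n * p ^ a" using pgt n0 by (rule mult_strict_left_mono)
      ultimately show False by linarith
    qed
    have npe: "\<not> p dvd e" unfolding e_def a_def using multiplicity_decompose[of n p] n0 nu by simp
    have cop: "coprime (p ^ a) e" using npe pp by (simp add: prime_imp_coprime)
    have "lcm g e = n"
    proof (rule dvd_antisym)
      show "lcm g e dvd n" using g ed by simp
      have "p ^ a dvd lcm g e" using pag by (meson dvd_lcm1 dvd_trans)
      moreover have "e dvd lcm g e" by simp
      ultimately have "p ^ a * e dvd lcm g e" using cop by (simp add: divides_mult)
      then show "n dvd lcm g e" using ne by simp
    qed
    then show False using H ed en by blast
  qed
next
  assume C: "cls n g = {}"
  show "\<forall>e. e dvd n \<and> e \<noteq> n \<longrightarrow> lcm g e \<noteq> n"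
  proof (intro allI impI)
    fix e assume e: "e dvd n \<and> e \<noteq> n"
    have n0: "n > 0" using n1 by simp
    obtain m where m: "n = e * m" using e by blast
    have m1: "m \<noteq> 1" using e m by auto
    then obtain p where pp: "Factorial_Ring.prime p" and pm: "p dvd m" using prime_factor_nat by blast
    have pn: "p dvd n" using pm m by simp
    have pe: "p * e dvd n" using pm m by (simp add: mult.commute mult_dvd_mono)
    have pF: "p \<in> prime_factors n" using pp pn n0 by (auto simp: in_prime_factors_iff)
    have pg: "p * g dvd n" using C pF unfolding cls_def by blast
    obtain q where q: "n = p * q" using pn by blast
    have p0: "p > 0" using pp prime_gt_0_nat by blast
    have "g dvd q" using pg q p0 by simp
    moreover have "e dvd q" using pe q p0 by simp
    ultimately have lq: "lcm g e dvd q" by simp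
    have q0: "q > 0" using q n0 by (metis gr0I mult_0_right)
    have "q < n" using q p0 q0 prime_gt_1_nat[OF pp] by simp
    then show "lcm g e \<noteq> n" using dvd_imp_le[OF lq q0] by simp
  qed
qed

lemma count_cls:
  fixes n :: nat
  assumes n0: "n > 0" and S: "S \<subseteq> prime_factors n"
  shows "card {d. d dvd n \<and> cls n d = S} = (\<Prod>p\<in>prime_factors n - S. multiplicity p n)"
proof -
  define PF where "PF = prime_factors n"
  define a where "a p = multiplicity p n" for p
  define f where "f r = (\<Prod>p\<in>PF. p ^ (if p \<in> S then a p else r p))" for r :: "nat \<Rightarrow> nat"
  define Dom where "Dom = PiE (PF - S) (\<lambda>p. {0..<a p})"
  have fPF: "finite PF" unfolding PF_def by simp
  have pPF: "\<And>p. p \<in> PF \<Longrightarrow> Factorial_Ring.prime p" unfolding PF_def by auto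
  have multf: "multiplicity q (f r) = (if q \<in> PF then (if q \<in> S then a q else r q) else 0)"
    if "Factorial_Ring.prime q" for q r
    unfolding f_def using multiplicity_prod_prime_powers[OF fPF pPF that] by simp
  have PF0: "0 \<notin> PF" using pPF not_prime_0 by blast
  have f0: "f r \<noteq> 0" for r unfolding f_def using PF0 fPF by (auto simp: prod_zero_iff)
  have mult_eq: "x = y" if "x \<noteq> 0" "y \<noteq> 0" "\<And>q. Factorial_Ring.prime q \<Longrightarrow> multiplicity q x = multiplicity q y" for x y :: nat
    using multiplicity_eq_imp_eq[OF that] by simp
  have dvdn: "f r dvd n" if r: "r \<in> Dom" for r
  proof (rule multiplicity_le_imp_dvd[OF f0])
    fix q :: nat assume q: "Factorial_Ring.prime q"
    show "multiplicity q (f r) \<le> multiplicity q n"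
      using r multf[OF q, of r] by (auto simp: Dom_def a_def PiE_iff less_imp_le)
  qed
  have clsf: "cls n (f r) = S" if r: "r \<in> Dom" for r
  proof -
    have "cls n (f r) = {p \<in> prime_factors n. multiplicity p n \<le> multiplicity p (f r)}"
      by (rule cls_alt[OF n0 dvdn[OF r]])
    also have "\<dots> = S"
    proof -
      have "multiplicity p n \<le> multiplicity p (f r) \<longleftrightarrow> p \<in> S" if p: "p \<in> PF" for p
      proof (cases "p \<in> S")
        case True
        then show ?thesis using multf[OF pPF[OF p], of r] p by (simp add: a_def)
      next
        case False
        then have "r p < a p" using r p unfolding Dom_def by (auto simp: PiE_iff)
        then show ?thesis using multf[OF pPF[OF p], of r] p False by (simp add: a_def)
      qed
      then show ?thesis using S unfolding PF_def by blast
    qed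
    finally show ?thesis .
  qed
  have bij: "bij_betw f Dom {d. d dvd n \<and> cls n d = S}"
  proof (rule bij_betw_imageI)
    show "inj_on f Dom"
    proof (rule inj_onI)
      fix r r' assume r: "r \<in> Dom" and r': "r' \<in> Dom" and eq: "f r = f r'"
      show "r = r'"
      proof (rule PiE_ext[OF r[unfolded Dom_def] r'[unfolded Dom_def]])
        fix p assume p: "p \<in> PF - S"
        have "multiplicity p (f r) = multiplicity p (f r')" using eq by simp
        then show "r p = r' p" using multf[of p r] multf[of p r'] p pPF by auto
      qed
    qed
    show "f ` Dom = {d. d dvd n \<and> cls n d = S}"
    proof
      show "f ` Dom \<subseteq> {d. d dvd n \<and> cls n d = S}" using dvdn clsf by auto
      show "{d. d dvd n \<and> cls n d = S} \<subseteq> f ` Dom"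
      proof
        fix d assume "d \<in> {d. d dvd n \<and> cls n d = S}"
        then have d: "d dvd n" and cd: "cls n d = S" by auto
        have d0: "d \<noteq> 0" using d n0 by auto
        have cd': "S = {p \<in> PF. a p \<le> multiplicity p d}"
          using cd cls_alt[OF n0 d] by (simp add: PF_def a_def)
        have mle: "multiplicity p d \<le> a p" for p
          unfolding a_def using d n0 by (intro dvd_imp_multiplicity_le) auto
        define r where "r = restrict (\<lambda>p. multiplicity p d) (PF - S)"
        have rD: "r \<in> Dom" unfolding Dom_def r_def using cd' by (auto simp: not_le)
        have "f r = d"
        proof (rule mult_eq[OF f0 d0])
          fix q :: nat assume q: "Factorial_Ring.prime q"
          show "multiplicity q (f r) = multiplicity q d"
          proof (cases "q \<in> PF")
            case True
            then show ?thesis using multf[OF q, of r] cd' mle[of q] by (auto simp: r_def)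
          next
            case False
            then have "\<not> q dvd n" using q n0 by (auto simp: PF_def in_prime_factors_iff)
            then have "\<not> q dvd d" using d dvd_trans by blast
            then show ?thesis using multf[OF q, of r] False by (simp add: not_dvd_imp_multiplicity_0)
          qed
        qed
        then show "d \<in> f ` Dom" using rD by blast
      qed
    qed
  qed
  have "card {d. d dvd n \<and> cls n d = S} = card Dom" using bij_betw_same_card[OF bij] by simp
  also have "\<dots> = (\<Prod>p\<in>PF - S. a p)" unfolding Dom_def using fPF by (simp add: card_PiE)
  finally show ?thesis by (simp add: PF_def a_def)
qed



lemma ess_dI:
  assumes n1: "n > 1" and g: "g dvd n"
  shows "essential_ideal (Zn n) (dI n g) \<longleftrightarrow> cls n g = {}"
proof -
  have z: "\<zero>\<^bsub>Zn n\<^esub> = 0" by (simp add: Zn_simps)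
  have "(\<forall>J. ideal J (Zn n) \<and> J \<noteq> {0} \<longrightarrow> dI n g \<inter> J \<noteq> {0})
      \<longleftrightarrow> (\<forall>e. e dvd n \<and> e \<noteq> n \<longrightarrow> lcm g e \<noteq> n)"
  proof
    assume H: "\<forall>J. ideal J (Zn n) \<and> J \<noteq> {0} \<longrightarrow> dI n g \<inter> J \<noteq> {0}"
    show "\<forall>e. e dvd n \<and> e \<noteq> n \<longrightarrow> lcm g e \<noteq> n"
    proof (intro allI impI)
      fix e assume e: "e dvd n \<and> e \<noteq> n"
      have "dI n g \<inter> dI n e \<noteq> {0}"
        using H dI_ideal[OF n1, of e] dI_zero_iff[OF n1, of e] e by blast
      then have "dI n (lcm g e) \<noteq> {0}" by (simp add: dI_inter)
      then show "lcm g e \<noteq> n" using dI_n n1 by auto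
    qed
  next
    assume H: "\<forall>e. e dvd n \<and> e \<noteq> n \<longrightarrow> lcm g e \<noteq> n"
    show "\<forall>J. ideal J (Zn n) \<and> J \<noteq> {0} \<longrightarrow> dI n g \<inter> J \<noteq> {0}"
    proof (intro allI impI)
      fix J assume J: "ideal J (Zn n) \<and> J \<noteq> {0}"
      then obtain e where e: "e dvd n" "J = dI n e" using ideal_is_dI[OF n1] by blast
      then have en: "e \<noteq> n" using J dI_n n1 by auto
      have l: "lcm g e dvd n" using g e(1) by simp
      have "lcm g e \<noteq> n" using H e(1) en by blast
      then have "dI n (lcm g e) \<noteq> {0}" using dI_zero_iff[OF n1 l] by simp
      then show "dI n g \<inter> J \<noteq> {0}" using e(2) by (simp add: dI_inter)
    qed
  qed
  then show ?thesis
    unfolding essential_ideal_def z using dI_ideal[OF n1 g] ess_iff_cls[OF n1 g] by simp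
qed

lemma cls_n: "n > 0 \<Longrightarrow> cls n n = prime_factors n"
proof -
  assume n0: "n > 0"
  have "\<not> p * n dvd n" if "p \<in> prime_factors n" for p
  proof
    assume "p * n dvd n"
    then have "p * n \<le> 1 * n" using n0 by (simp add: dvd_imp_le)
    then have "p \<le> 1" using n0 by simp
    moreover have "p > 1" using that prime_gt_1_nat in_prime_factors_imp_prime by blast
    ultimately show False by simp
  qed
  then show ?thesis unfolding cls_def by blast
qed

lemma n_weight_pos:
  assumes n0: "n > 0"
  shows "n_weight n S > 0"
proof -
  have "multiplicity p n > 0" if "p \<in> prime_factors n - S" for p
  proof -
    have p: "Factorial_Ring.prime p" "p dvd n" using that by (auto simp: in_prime_factors_iff)
    have "p ^ 1 dvd n" using p by simp
    moreover have "\<not> is_unit p" using p(1) by auto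
    ultimately show ?thesis using power_dvd_iff_le_multiplicity[of n p 1] n0 by simp
  qed
  then show ?thesis unfolding n_weight_def by (intro prod_pos) auto
qed

theorem mainTheorem12:
  fixes n :: nat
  assumes "n > 1" and "\<not> Factorial_Ring.prime n"
  shows "laplacian_integral (EIG_vertices (Zn n)) (EIG_adj (Zn n))
     \<longleftrightarrow> all_eigenvalues_integral (G_vertices n) (LG n)"
proof -
  have n1: "n > 1" by fact
  have n0: "n > 0" using n1 by simp
  define D where "D = {d. d dvd n \<and> d \<noteq> 1 \<and> d \<noteq> n}"
  have V: "EIG_vertices (Zn n) = dI n ` D"
  proof
    show "EIG_vertices (Zn n) \<subseteq> dI n ` D"
    proof
      fix I assume "I \<in> EIG_vertices (Zn n)"
      then have I: "ideal I (Zn n)" "I \<noteq> {0}" "I \<noteq> carrier (Zn n)"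
        by (auto simp: EIG_vertices_def Zn_simps)
      obtain d where d: "d dvd n" "I = dI n d" using ideal_is_dI[OF n1 I(1)] by blast
      have "d \<noteq> n" using I(2) d dI_zero_iff[OF n1 d(1)] by simp
      moreover have "d \<noteq> 1" using I(3) d dI_carrier_iff[OF n1 d(1)] by simp
      ultimately show "I \<in> dI n ` D" using d unfolding D_def by blast
    qed
    show "dI n ` D \<subseteq> EIG_vertices (Zn n)"
    proof
      fix I assume "I \<in> dI n ` D"
      then obtain d where d: "d dvd n" "d \<noteq> 1" "d \<noteq> n" "I = dI n d" unfolding D_def by blast
      show "I \<in> EIG_vertices (Zn n)"
        using d dI_ideal[OF n1 d(1)] dI_zero_iff[OF n1 d(1)] dI_carrier_iff[OF n1 d(1)]
        by (simp add: EIG_vertices_def Zn_simps)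
    qed
  qed
  define gen where "gen I = (SOME d. d dvd n \<and> I = dI n d)" for I
  have gen_dI: "gen (dI n d) = d" if "d dvd n" for d
  proof -
    have "\<exists>d'. d' dvd n \<and> dI n d = dI n d'" using that by blast
    then have "gen (dI n d) dvd n \<and> dI n d = dI n (gen (dI n d))"
      unfolding gen_def by (rule someI_ex)
    then show ?thesis using dI_inj[OF n1 that] by metis
  qed
  define clsV where "clsV I = cls n (gen I)" for I
  define ess where "ess = {I \<in> dI n ` D. clsV I = {}}"
  have clsV_dI: "clsV (dI n d) = cls n d" if "d dvd n" for d
    using gen_dI[OF that] by (simp add: clsV_def)
  have cls_GV: "cls n d \<in> G_vertices n \<longleftrightarrow> cls n d \<noteq> {}" if "d \<in> D" for d
    using that cls_sub[of n d] cls_full[OF n0, of d] unfolding G_vertices_def D_def by auto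
  have finD: "finite D" unfolding D_def by (rule finite_subset[of _ "{..n}"]) (auto simp: dvd_imp_le n0)
  have "laplacian_integral (dI n ` D) (EIG_adj (Zn n)) \<longleftrightarrow> all_eigenvalues_integral (G_vertices n) (LG n)"
  proof (rule abstract_main[where cls = clsV and ess = ess and A = "G_adj n" and w = "n_weight n"])
    show "finite (dI n ` D)" using finD by simp
    show "finite (G_vertices n)"
      by (rule finite_subset[of _ "Pow (prime_factors n)"]) (auto simp: G_vertices_def)
    show "ess \<subseteq> dI n ` D" unfolding ess_def by blast
    show "clsV x \<in> G_vertices n" if xV: "x \<in> dI n ` D - ess" for x
    proof -
      obtain d where d: "d \<in> D" "x = dI n d" using xV by blast
      have dd: "d dvd n" using d(1) by (simp add: D_def)
      show ?thesis using xV d cls_GV[OF d(1)] clsV_dI[OF dd] unfolding ess_def by auto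
    qed
    show "card {x \<in> dI n ` D - ess. clsV x = S} = n_weight n S" if S: "S \<in> G_vertices n" for S
    proof -
      have SPF: "S \<subseteq> prime_factors n" "S \<noteq> {}" "S \<noteq> prime_factors n" using S by (auto simp: G_vertices_def)
      have eq: "{x \<in> dI n ` D - ess. clsV x = S} = dI n ` {d. d dvd n \<and> cls n d = S}"
      proof
        show "{x \<in> dI n ` D - ess. clsV x = S} \<subseteq> dI n ` {d. d dvd n \<and> cls n d = S}"
        proof
          fix x assume x: "x \<in> {x \<in> dI n ` D - ess. clsV x = S}"
          then obtain d where d: "d \<in> D" "x = dI n d" by blast
          have dd: "d dvd n" using d(1) by (simp add: D_def)
          show "x \<in> dI n ` {d. d dvd n \<and> cls n d = S}" using x d dd clsV_dI[OF dd] by auto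
        qed
        show "dI n ` {d. d dvd n \<and> cls n d = S} \<subseteq> {x \<in> dI n ` D - ess. clsV x = S}"
        proof
          fix x assume "x \<in> dI n ` {d. d dvd n \<and> cls n d = S}"
          then obtain d where d: "d dvd n" "cls n d = S" "x = dI n d" by blast
          have "d \<noteq> 1" using d(2) SPF(2) cls_one[of n] by auto
          moreover have "d \<noteq> n" using d(2) SPF(3) cls_n[OF n0] by auto
          ultimately have dD: "d \<in> D" using d(1) by (simp add: D_def)
          have "clsV x = S" using d clsV_dI[OF d(1)] by simp
          then show "x \<in> {x \<in> dI n ` D - ess. clsV x = S}"
            using dD d(3) SPF(2) unfolding ess_def by auto
        qed
      qed
      have inj: "inj_on (dI n) {d. d dvd n \<and> cls n d = S}"
        by (rule inj_onI) (use dI_inj[OF n1] in auto)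
      have "card {x \<in> dI n ` D - ess. clsV x = S} = card {d. d dvd n \<and> cls n d = S}"
        unfolding eq by (rule card_image[OF inj])
      also have "\<dots> = n_weight n S" using count_cls[OF n0 SPF(1)] by (simp add: n_weight_def)
      finally show ?thesis .
    qed
    show "n_weight n S > 0" if "S \<in> G_vertices n" for S using n_weight_pos[OF n0] .
    show "EIG_adj (Zn n) x y \<longleftrightarrow> x \<noteq> y \<and> (x \<in> ess \<or> y \<in> ess \<or> G_adj n (clsV x) (clsV y))"
      if x: "x \<in> dI n ` D" and y: "y \<in> dI n ` D" for x y
    proof -
      obtain d where d: "d \<in> D" "x = dI n d" using x by blast
      obtain e where e: "e \<in> D" "y = dI n e" using y by blast
      have dd: "d dvd n" and ed: "e dvd n" using d(1) e(1) by (simp_all add: D_def)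
      have gd: "gcd d e dvd n" using dd by (meson dvd_trans gcd_dvd1)
      have "EIG_adj (Zn n) x y \<longleftrightarrow> x \<noteq> y \<and> essential_ideal (Zn n) (dI n (gcd d e))"
        unfolding EIG_adj_def V[symmetric] using x y d e dI_add[OF n1 dd ed] by (simp add: V)
      also have "\<dots> \<longleftrightarrow> x \<noteq> y \<and> cls n d \<inter> cls n e = {}"
        using ess_dI[OF n1 gd] cls_gcd[OF n0 dd ed] by simp
      also have "\<dots> \<longleftrightarrow> x \<noteq> y \<and> (x \<in> ess \<or> y \<in> ess \<or> G_adj n (clsV x) (clsV y))"
        using cls_GV[OF d(1)] cls_GV[OF e(1)] clsV_dI[OF dd] clsV_dI[OF ed] d e x y
        unfolding ess_def G_adj_def by auto
      finally show ?thesis .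
    qed
    show "G_adj n T S" if "G_adj n S T" for S T using that unfolding G_adj_def by blast
    show "\<not> G_adj n S S" for S unfolding G_adj_def G_vertices_def by blast
    show "S \<in> G_vertices n \<and> T \<in> G_vertices n" if "G_adj n S T" for S T using that unfolding G_adj_def by blast
    show "LG n S T = (if S = T then int (\<Sum>T\<in>{T \<in> G_vertices n. G_adj n S T}. n_weight n T)
                   else if G_adj n S T then - int (n_weight n T) else 0)" for S T
      unfolding LG_def N_weight_def by simp
  qed
  then show ?thesis unfolding V .
qed

end
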